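(* For every $N\ge3$, the given generators of $I_N$ form a regular sequence in $\mathbb C[k_1,\dots,k_N]$ and the given generators of $I'_N$ form a regular sequence in $\mathbb C[v_1,w_1,\dots,v_N,w_N]$; so the quotients are complete intersections.
   Context: Write $k_i=\begin{pmatrix}a_i&b_i\\c_i&d_i\end{pmatrix}$ ($4N$ variables), $Q_i=a_id_i-b_ic_i$, and let $v_i,w_i$ be $2$-component column vectors of variables ($4N$ variables). $I_N\subset\mathbb C[k_1,\dots,k_N]$ is generated by the four entries of $k_1+\dots+k_N$ and $Q_1,\dots,Q_N$; $I'_N\subset\mathbb C[v,w]$ is generated by the four entries of $v_1w_1^T+\dots+v_Nw_N^T$. *)

theory Defs
  imports Complex_Main "HOL-Library.Poly_Mapping"
begin

type_synonym mpoly = "(nat \<Rightarrow>\<^sub>0 nat) \<Rightarrow>\<^sub>0 complex"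

definition Var :: "nat \<Rightarrow> mpoly" where
  "Var i = Poly_Mapping.single (Poly_Mapping.single i 1) 1"

definition vars :: "mpoly \<Rightarrow> nat set" where
  "vars p = \<Union> (Poly_Mapping.keys ` Poly_Mapping.keys p)"

definition poly_ring :: "nat \<Rightarrow> mpoly set" where
  "poly_ring n = {p. vars p \<subseteq> {..<n}}"

definition ideal_gen :: "nat \<Rightarrow> mpoly list \<Rightarrow> mpoly set" where
  "ideal_gen n fs = {(\<Sum>i<length fs. a i * fs ! i) | a. \<forall>i. a i \<in> poly_ring n}"

definition regular_seq :: "nat \<Rightarrow> mpoly list \<Rightarrow> bool" where
  "regular_seq n fs \<longleftrightarrow>
     set fs \<subseteq> poly_ring n \<and>
     1 \<notin> ideal_gen n fs \<and>
     (\<forall>i<length fs. \<forall>g\<in>poly_ring n.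
        g * fs ! i \<in> ideal_gen n (take i fs) \<longrightarrow> g \<in> ideal_gen n (take i fs))"

text \<open>Variables of C[k_1,...,k_N] (indices 0..N-1): k_i = [[a_i,b_i],[c_i,d_i]]
  with a_i = X_(4i), b_i = X_(4i+1), c_i = X_(4i+2), d_i = X_(4i+3).\<close>
definition ka :: "nat \<Rightarrow> mpoly" where "ka i = Var (4*i)"
definition kb :: "nat \<Rightarrow> mpoly" where "kb i = Var (4*i+1)"
definition kc :: "nat \<Rightarrow> mpoly" where "kc i = Var (4*i+2)"
definition kd :: "nat \<Rightarrow> mpoly" where "kd i = Var (4*i+3)"

definition gens_I :: "nat \<Rightarrow> mpoly list" where
  "gens_I N = [\<Sum>i<N. ka i, \<Sum>i<N. kb i, \<Sum>i<N. kc i, \<Sum>i<N. kd i]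
              @ map (\<lambda>i. ka i * kd i - kb i * kc i) [0..<N]"

text \<open>Variables of C[v,w]: v_i = (X_(4i), X_(4i+1))^T, w_i = (X_(4i+2), X_(4i+3))^T.\<close>
definition vv :: "nat \<Rightarrow> nat \<Rightarrow> mpoly" where "vv i j = Var (4*i + j)"
definition ww :: "nat \<Rightarrow> nat \<Rightarrow> mpoly" where "ww i j = Var (4*i + 2 + j)"

definition gens_I' :: "nat \<Rightarrow> mpoly list" where
  "gens_I' N = [\<Sum>i<N. vv i 0 * ww i 0, \<Sum>i<N. vv i 0 * ww i 1,
                \<Sum>i<N. vv i 1 * ww i 0, \<Sum>i<N. vv i 1 * ww i 1]"

end

theory Submission
  imports Defs
begin


abbreviation "lkp \<equiv> Poly_Mapping.lookup"
abbreviation "kys \<equiv> Poly_Mapping.keys"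
abbreviation "sng \<equiv> Poly_Mapping.single"

lemma lookup_mult_fin:
  fixes p q :: mpoly
  shows "lkp (p * q) k =
     (\<Sum>a\<in>kys p. \<Sum>b\<in>kys q. (lkp p a * lkp q b when k = a + b))"
proof -
  have "lkp (p * q) k = (\<Sum>l. lkp p l * (\<Sum>r. lkp q r when k = l + r))"
    by (rule lookup_mult)
  also have "\<dots> = (\<Sum>l\<in>kys p. lkp p l * (\<Sum>r. lkp q r when k = l + r))"
    by (rule Sum_any.expand_superset) (auto simp: in_keys_iff)
  also have "\<dots> = (\<Sum>l\<in>kys p. lkp p l * (\<Sum>r\<in>kys q. lkp q r when k = l + r))"
    apply (rule sum.cong, simp)
    apply (subst Sum_any.expand_superset[of "kys q"]) 
    by (auto simp: in_keys_iff)
  finally show ?thesis by (simp add: sum_distrib_left mult_when)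
qed

lemma poly_ring_iff: "p \<in> poly_ring n \<longleftrightarrow> (\<forall>t\<in>kys p. kys t \<subseteq> {..<n})"
  by (auto simp: poly_ring_def vars_def)

lemma pr_zero[simp]: "0 \<in> poly_ring n" by (simp add: poly_ring_iff)
lemma pr_one[simp]: "1 \<in> poly_ring n" by (simp add: poly_ring_iff)

lemma pr_add: assumes "p \<in> poly_ring n" "q \<in> poly_ring n" shows "p + q \<in> poly_ring n"
  unfolding poly_ring_iff
proof
  fix t assume "t \<in> kys (p + q)"
  then have "t \<in> kys p \<or> t \<in> kys q" using keys_add[of p q] by blast
  then show "kys t \<subseteq> {..<n}" using assms unfolding poly_ring_iff by blast
qed

lemma pr_uminus: "p \<in> poly_ring n \<Longrightarrow> - p \<in> poly_ring n"
  unfolding poly_ring_iff by simp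

lemma pr_diff: "p \<in> poly_ring n \<Longrightarrow> q \<in> poly_ring n \<Longrightarrow> p - q \<in> poly_ring n"
  using pr_add[of p n "-q"] pr_uminus by simp

lemma keys_add_nat: "kys ((a::nat \<Rightarrow>\<^sub>0 nat) + b) = kys a \<union> kys b"
  by (auto simp: in_keys_iff lookup_add)

lemma pr_mult: assumes "p \<in> poly_ring n" "q \<in> poly_ring n" shows "p * q \<in> poly_ring n"
  unfolding poly_ring_iff
proof
  fix t assume "t \<in> kys (p * q)"
  then obtain a b where "t = a + b" "a \<in> kys p" "b \<in> kys q" using keys_mult[of p q] by blast
  then show "kys t \<subseteq> {..<n}" using assms unfolding poly_ring_iff by (simp add: keys_add_nat)
qed

lemma pr_single: "kys t \<subseteq> {..<n} \<Longrightarrow> sng t c \<in> poly_ring n"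
  unfolding poly_ring_iff by simp

lemma pr_sum: "(\<And>i. i \<in> A \<Longrightarrow> f i \<in> poly_ring n) \<Longrightarrow> sum f A \<in> poly_ring n"
  by (induction A rule: infinite_finite_induct) (auto intro: pr_add)

lemma ig_intro: "x = (\<Sum>i<length fs. a i * fs ! i) \<Longrightarrow> (\<And>i. a i \<in> poly_ring n) \<Longrightarrow> x \<in> ideal_gen n fs"
  unfolding ideal_gen_def by blast

lemma ig_zero[simp]: "0 \<in> ideal_gen n fs"
  unfolding ideal_gen_def by (rule CollectI, rule exI[of _ "\<lambda>_. 0"]) simp

lemma ig_add: assumes "x \<in> ideal_gen n fs" "y \<in> ideal_gen n fs" shows "x + y \<in> ideal_gen n fs"
proof -
  obtain a where a: "x = (\<Sum>i<length fs. a i * fs ! i)" "\<forall>i. a i \<in> poly_ring n"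
    using assms(1) unfolding ideal_gen_def by blast
  obtain b where b: "y = (\<Sum>i<length fs. b i * fs ! i)" "\<forall>i. b i \<in> poly_ring n"
    using assms(2) unfolding ideal_gen_def by blast
  have "x + y = (\<Sum>i<length fs. (a i + b i) * fs ! i)"
    by (simp add: a b sum.distrib distrib_right)
  moreover have "\<forall>i. a i + b i \<in> poly_ring n" using a b pr_add by blast
  ultimately show ?thesis by (intro ig_intro) auto
qed

lemma ig_mult: assumes "x \<in> ideal_gen n fs" "c \<in> poly_ring n" shows "c * x \<in> ideal_gen n fs"
proof -
  obtain a where a: "x = (\<Sum>i<length fs. a i * fs ! i)" "\<forall>i. a i \<in> poly_ring n"
    using assms(1) unfolding ideal_gen_def by blast
  have "c * x = (\<Sum>i<length fs. (c * a i) * fs ! i)"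
    by (simp add: a sum_distrib_left mult.assoc)
  moreover have "\<forall>i. c * a i \<in> poly_ring n" using a assms(2) pr_mult by blast
  ultimately show ?thesis by (intro ig_intro) auto
qed

lemma ig_diff: assumes "x \<in> ideal_gen n fs" "y \<in> ideal_gen n fs" shows "x - y \<in> ideal_gen n fs"
proof -
  have "(-1) * y \<in> ideal_gen n fs" by (rule ig_mult[OF assms(2)]) (rule pr_uminus, simp)
  then have "- y \<in> ideal_gen n fs" by simp
  then show ?thesis using ig_add[OF assms(1), of "- y"] by simp
qed

lemma ig_gen: assumes "j < length fs" shows "fs ! j \<in> ideal_gen n fs"
proof -
  have "(\<Sum>i<length fs. (if i = j then 1 else 0) * fs ! i) = (\<Sum>i<length fs. if i = j then fs ! i else 0)"
    by (rule sum.cong) auto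
  also have "\<dots> = fs ! j" using assms by (simp add: sum.delta)
  finally show ?thesis by (intro ig_intro[where a="\<lambda>i. if i = j then 1 else 0"]) auto
qed

lemma ig_Nil: "ideal_gen n [] = {0}"
proof -
  have "ideal_gen n [] \<subseteq> {0}" unfolding ideal_gen_def by auto
  then show ?thesis using ig_zero[of n "[]"] by blast
qed

lemma ig_ring: assumes "set fs \<subseteq> poly_ring n" "x \<in> ideal_gen n fs" shows "x \<in> poly_ring n"
proof -
  obtain a where a: "x = (\<Sum>i<length fs. a i * fs ! i)" "\<forall>i. a i \<in> poly_ring n"
    using assms(2) unfolding ideal_gen_def by blast
  show ?thesis unfolding a(1)
  proof (rule pr_sum)
    fix i assume "i \<in> {..<length fs}"
    then have "fs ! i \<in> poly_ring n" using assms(1) nth_mem by (metis lessThan_iff subsetD)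
    then show "a i * fs ! i \<in> poly_ring n" using a(2) pr_mult by blast
  qed
qed

lemma ig_Suc:
  assumes "k < length fs" "h \<in> ideal_gen n (take (Suc k) fs)"
  shows "\<exists>p\<in>ideal_gen n (take k fs). \<exists>a\<in>poly_ring n. h = p + a * fs ! k"
proof -
  obtain a where a: "h = (\<Sum>i<length (take (Suc k) fs). a i * (take (Suc k) fs) ! i)" "\<forall>i. a i \<in> poly_ring n"
    using assms(2) unfolding ideal_gen_def by blast
  have "h = (\<Sum>i<Suc k. a i * fs ! i)"
    unfolding a(1) using assms(1) by (intro sum.cong) (auto simp: min_def)
  also have "\<dots> = (\<Sum>i<k. a i * fs ! i) + a k * fs ! k" by simp
  finally have h: "h = (\<Sum>i<k. a i * fs ! i) + a k * fs ! k" .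
  have "(\<Sum>i<k. a i * fs ! i) = (\<Sum>i<length (take k fs). a i * (take k fs) ! i)"
    using assms(1) by (intro sum.cong) (auto simp: min_def)
  hence "(\<Sum>i<k. a i * fs ! i) \<in> ideal_gen n (take k fs)"
    unfolding ideal_gen_def using a(2) by blast
  thus ?thesis using h a(2) by blast
qed

section \<open>monomials\<close>

definition mdvd :: "(nat \<Rightarrow>\<^sub>0 nat) \<Rightarrow> (nat \<Rightarrow>\<^sub>0 nat) \<Rightarrow> bool" where
  "mdvd m t \<longleftrightarrow> (\<forall>i. lkp m i \<le> lkp t i)"

definition mcop :: "(nat \<Rightarrow>\<^sub>0 nat) \<Rightarrow> (nat \<Rightarrow>\<^sub>0 nat) \<Rightarrow> bool" where
  "mcop a b \<longleftrightarrow> (\<forall>i. lkp a i = 0 \<or> lkp b i = 0)"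

lemma mdvd_cop: assumes h1: "mcop a b" and h2: "mdvd a (t + b)" shows "mdvd a t"
  unfolding mdvd_def
proof
  fix i
  from h1 have "lkp a i = 0 \<or> lkp b i = 0" by (simp add: mcop_def)
  moreover from h2 have "lkp a i \<le> lkp t i + lkp b i" by (simp add: mdvd_def lookup_add)
  ultimately show "lkp a i \<le> lkp t i" by auto
qed

lemma mdvd_diff_add: "mdvd m t \<Longrightarrow> (t - m) + m = t"
  unfolding mdvd_def by (intro poly_mapping_eqI) (simp add: lookup_add lookup_minus)

lemma mdvd_add: "mdvd m (s + m)"
  unfolding mdvd_def by (simp add: lookup_add)

lemma mdvd_zero: "mdvd m 0 \<Longrightarrow> m = 0"
  unfolding mdvd_def by (intro poly_mapping_eqI) simp

lemma keys_mdiff: "kys (t - (m::nat \<Rightarrow>\<^sub>0 nat)) \<subseteq> kys t"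
  by (auto simp: in_keys_iff lookup_minus)

section \<open>weights\<close>

lemma top_coeff:
  fixes p q :: mpoly
  assumes add: "\<And>a b. \<omega> (a + b) = (\<omega> a + \<omega> b :: nat)"
    and hp: "\<forall>s\<in>kys p. \<omega> s \<le> \<omega> t" and hq: "\<forall>u\<in>kys q. u \<noteq> m \<longrightarrow> \<omega> u < \<omega> m"
  shows "lkp (p * q) (t + m) = lkp p t * lkp q m"
proof -
  have eq: "(lkp p a * lkp q b when t + m = a + b) = (if a = t \<and> b = m then lkp p a * lkp q b else 0)"
    if "a \<in> kys p" "b \<in> kys q" for a b
  proof (cases "t + m = a + b")
    case True
    have "b = m"
    proof (rule ccontr)
      assume "b \<noteq> m"
      hence "\<omega> b < \<omega> m" using hq that by blast
      moreover have "\<omega> a \<le> \<omega> t" using hp that by blast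
      moreover have "\<omega> t + \<omega> m = \<omega> a + \<omega> b" using True add by (metis (no_types))
      ultimately show False by linarith
    qed
    moreover then have "a = t" using True by simp
    ultimately show ?thesis by simp
  next
    case False
    then show ?thesis by auto
  qed
  have "lkp (p * q) (t + m) = (\<Sum>a\<in>kys p. \<Sum>b\<in>kys q. (if a = t \<and> b = m then lkp p a * lkp q b else 0))"
    unfolding lookup_mult_fin by (intro sum.cong refl) (simp add: eq)
  also have "\<dots> = (\<Sum>a\<in>kys p. if a = t then (if m \<in> kys q then lkp p a * lkp q m else 0) else 0)"
    apply (rule sum.cong[OF refl])
    subgoal for a by (cases "a = t") (simp_all add: sum.delta)
    done
  also have "\<dots> = (if t \<in> kys p then (if m \<in> kys q then lkp p t * lkp q m else 0) else 0)"
    by (simp add: sum.delta)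
  also have "\<dots> = lkp p t * lkp q m" by (auto simp: in_keys_iff)
  finally show ?thesis .
qed

lemma keys_mult_w:
  fixes p q :: mpoly
  assumes add: "\<And>a b. \<omega> (a + b) = (\<omega> a + \<omega> b :: nat)"
    and "s \<in> kys (p * q)" "\<forall>a\<in>kys p. \<omega> a \<le> A" "\<forall>b\<in>kys q. \<omega> b \<le> B"
  shows "\<omega> s \<le> A + B"
proof -
  obtain a b where "s = a + b" "a \<in> kys p" "b \<in> kys q" using keys_mult[of p q] assms(2) by blast
  then have "\<omega> s = \<omega> a + \<omega> b" using add by simp
  then show ?thesis using assms(3,4) \<open>a \<in> kys p\<close> \<open>b \<in> kys q\<close> by (simp add: add_mono)
qed

lemma keys_mult_top:
  fixes p q :: mpoly
  assumes add: "\<And>a b. \<omega> (a + b) = (\<omega> a + \<omega> b :: nat)"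
    and "s \<in> kys (p * q)" "\<forall>a\<in>kys p. \<omega> a \<le> A" "\<forall>u\<in>kys q. u \<noteq> m \<longrightarrow> \<omega> u < \<omega> m"
    and "A + \<omega> m \<le> \<omega> s"
  shows "\<exists>a. s = a + m"
proof -
  obtain a b where ab: "s = a + b" "a \<in> kys p" "b \<in> kys q" using keys_mult[of p q] assms(2) by blast
  show ?thesis
  proof (cases "b = m")
    case False
    then have "\<omega> b < \<omega> m" using assms(4) ab by blast
    moreover have "\<omega> a \<le> A" using assms(3) ab by blast
    moreover have "\<omega> s = \<omega> a + \<omega> b" by (simp add: ab add)
    ultimately have False using assms(5) by linarith
    then show ?thesis ..
  qed (use ab in blast)
qed

lemma top_ex:
  fixes p :: mpoly
  assumes "p \<noteq> 0"
  shows "\<exists>t\<in>kys p. \<forall>s\<in>kys p. \<omega> s \<le> (\<omega> t :: nat)"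
proof -
  have ne: "kys p \<noteq> {}" using assms by simp
  have "Max (\<omega> ` kys p) \<in> \<omega> ` kys p" using ne by (intro Max_in) auto
  then obtain t where "t \<in> kys p" "\<omega> t = Max (\<omega> ` kys p)" by auto
  moreover have "\<forall>s\<in>kys p. \<omega> s \<le> Max (\<omega> ` kys p)" by simp
  ultimately show ?thesis by metis
qed




locale CLM =
  fixes n :: nat and \<omega> :: "(nat \<Rightarrow>\<^sub>0 nat) \<Rightarrow> nat" and fs :: "mpoly list" and ms :: "(nat \<Rightarrow>\<^sub>0 nat) list"
  assumes w_add: "\<And>a b. \<omega> (a + b) = \<omega> a + \<omega> b"
    and fs_ring: "set fs \<subseteq> poly_ring n"
    and lc: "\<And>j. j < length fs \<Longrightarrow> lkp (fs ! j) (ms ! j) \<noteq> 0"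
    and lower: "\<And>j u. j < length fs \<Longrightarrow> u \<in> kys (fs ! j) \<Longrightarrow> u \<noteq> ms ! j \<Longrightarrow> \<omega> u < \<omega> (ms ! j)"
    and cop: "\<And>i j. i < length fs \<Longrightarrow> j < length fs \<Longrightarrow> i \<noteq> j \<Longrightarrow> mcop (ms ! i) (ms ! j)"
    and nz: "\<And>j. j < length fs \<Longrightarrow> ms ! j \<noteq> 0"
begin

definition bad :: "nat \<Rightarrow> (nat \<Rightarrow>\<^sub>0 nat) \<Rightarrow> bool" where
  "bad k t \<longleftrightarrow> (\<exists>j<k. mdvd (ms ! j) t)"

lemma fs_nth_ring: "j < length fs \<Longrightarrow> fs ! j \<in> poly_ring n"
  by (rule subsetD[OF fs_ring nth_mem])

lemma ig_take_gen: "j < k \<Longrightarrow> k \<le> length fs \<Longrightarrow> fs ! j \<in> ideal_gen n (take k fs)"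
proof -
  assume a: "j < k" "k \<le> length fs"
  have "take k fs ! j \<in> ideal_gen n (take k fs)" by (rule ig_gen) (use a in simp)
  moreover have "take k fs ! j = fs ! j" using a by simp
  ultimately show ?thesis by simp
qed

lemma w_diff: "mdvd m t \<Longrightarrow> \<omega> (t - m) + \<omega> m = \<omega> t"
proof -
  assume "mdvd m t"
  then have e: "t - m + m = t" by (rule mdvd_diff_add)
  have "\<omega> (t - m + m) = \<omega> (t - m) + \<omega> m" by (rule w_add)
  then show ?thesis unfolding e by simp
qed

lemma red_step:
  assumes k: "k \<le> length fs" and j: "j < k" and g: "g \<in> poly_ring n" and t: "t \<in> kys g"
    and dv: "mdvd (ms ! j) t"
  defines "mn \<equiv> sng (t - ms ! j) (lkp g t / lkp (fs ! j) (ms ! j))"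
  defines "g1 \<equiv> g - mn * fs ! j"
  shows "g1 \<in> poly_ring n" "mn * fs ! j \<in> ideal_gen n (take k fs)"
    "\<And>s. s \<in> kys (mn * fs ! j) \<Longrightarrow> \<omega> s \<le> \<omega> t"
    "lkp g1 t = 0"
    "\<And>s. \<omega> t \<le> \<omega> s \<Longrightarrow> s \<noteq> t \<Longrightarrow> lkp g1 s = lkp g s"
proof -
  have jl: "j < length fs" using j k by simp
  let ?m = "ms ! j" and ?f = "fs ! j"
  have mn_ring: "mn \<in> poly_ring n"
  proof -
    have "kys t \<subseteq> {..<n}" using g t unfolding poly_ring_iff by blast
    then have "kys (t - ?m) \<subseteq> {..<n}" using keys_mdiff[of t ?m] by blast
    then show ?thesis unfolding mn_def by (rule pr_single)
  qed
  show "g1 \<in> poly_ring n" unfolding g1_def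
    by (intro pr_diff pr_mult g mn_ring fs_nth_ring jl)
  show "mn * fs ! j \<in> ideal_gen n (take k fs)"
    by (rule ig_mult[OF _ mn_ring], rule ig_take_gen[OF j k])
  have km: "kys mn \<subseteq> {t - ?m}" unfolding mn_def by simp
  have P1: "\<omega> s \<le> \<omega> t \<and> (s \<noteq> t \<longrightarrow> \<omega> s < \<omega> t)" if s_in: "s \<in> kys (mn * ?f)" for s
  proof -
    obtain a b where ab: "s = a + b" "a \<in> kys mn" "b \<in> kys ?f" using keys_mult[of mn ?f] s_in by blast
    have a: "a = t - ?m" using ab km by auto
    show ?thesis
    proof (cases "b = ?m")
      case True
      then have "s = t" using ab a mdvd_diff_add[OF dv] by simp
      then show ?thesis by simp
    next
      case False
      then have "\<omega> b < \<omega> ?m" using lower[OF jl ab(3)] by simp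
      then show ?thesis using ab a w_add w_diff[OF dv] by simp
    qed
  qed
  then show "\<And>s. s \<in> kys (mn * fs ! j) \<Longrightarrow> \<omega> s \<le> \<omega> t" by blast
  have "lkp (mn * ?f) ((t - ?m) + ?m) = lkp mn (t - ?m) * lkp ?f ?m"
  proof -
    have h1: "\<forall>s\<in>kys mn. \<omega> s \<le> \<omega> (t - ?m)" using km by auto
    have h2: "\<forall>u\<in>kys ?f. u \<noteq> ?m \<longrightarrow> \<omega> u < \<omega> ?m" using lower[OF jl] by blast
    show ?thesis by (rule top_coeff[where \<omega> = \<omega>, OF w_add h1 h2])
  qed
  hence "lkp (mn * ?f) t = lkp g t"
    using mdvd_diff_add[OF dv] lc[OF jl] unfolding mn_def by simp
  then show "lkp g1 t = 0" unfolding g1_def by (simp add: lookup_minus)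
  show "lkp g1 s = lkp g s" if "\<omega> t \<le> \<omega> s" "s \<noteq> t" for s
  proof -
    have "s \<notin> kys (mn * ?f)"
    proof
      assume "s \<in> kys (mn * ?f)"
      then have "\<omega> s < \<omega> t" using P1 that(2) by blast
      then show False using that(1) by linarith
    qed
    then show ?thesis unfolding g1_def by (simp add: lookup_minus in_keys_iff)
  qed
qed

lemma red:
  assumes k: "k \<le> length fs" and g: "g \<in> poly_ring n"
  shows "\<exists>r\<in>ideal_gen n (take k fs). g - r \<in> poly_ring n \<and> (\<forall>t\<in>kys (g - r). \<not> bad k t)"
proof -
  have main: "\<And>g. g \<in> poly_ring n \<Longrightarrow> (\<forall>t\<in>kys g. bad k t \<longrightarrow> \<omega> t < W) \<Longrightarrow>
     \<exists>r\<in>ideal_gen n (take k fs). g - r \<in> poly_ring n \<and> (\<forall>t\<in>kys (g - r). \<not> bad k t)" for W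
  proof (induction W)
    case 0
    then show ?case by (intro bexI[of _ 0]) auto
  next
    case (Suc W)
    have inner: "\<And>g. g \<in> poly_ring n \<Longrightarrow> (\<forall>t\<in>kys g. bad k t \<longrightarrow> \<omega> t \<le> W) \<Longrightarrow>
       card {t\<in>kys g. bad k t \<and> \<omega> t = W} = c \<Longrightarrow>
       \<exists>r\<in>ideal_gen n (take k fs). g - r \<in> poly_ring n \<and> (\<forall>t\<in>kys (g - r). \<not> bad k t)" for c
    proof (induction c)
      case 0
      have "finite {t\<in>kys g. bad k t \<and> \<omega> t = W}" by simp
      then have "{t\<in>kys g. bad k t \<and> \<omega> t = W} = {}" using 0 by simp
      note E = this
      have "\<forall>t\<in>kys g. bad k t \<longrightarrow> \<omega> t < W"
      proof (intro ballI impI)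
        fix t assume a: "t \<in> kys g" "bad k t"
        have "\<omega> t \<noteq> W"
        proof
          assume "\<omega> t = W"
          then have "t \<in> {t\<in>kys g. bad k t \<and> \<omega> t = W}" using a by simp
          then show False using E by simp
        qed
        moreover have "\<omega> t \<le> W" using "0.prems"(2) a by blast
        ultimately show "\<omega> t < W" by simp
      qed
      then show ?case using Suc.IH "0.prems"(1) by blast
    next
      case (Suc c)
      have "{t\<in>kys g. bad k t \<and> \<omega> t = W} \<noteq> {}"
      proof
        assume "{t\<in>kys g. bad k t \<and> \<omega> t = W} = {}"
        then have "card {t\<in>kys g. bad k t \<and> \<omega> t = W} = 0" by (simp only: card.empty)
        then show False using Suc.prems(3) by simp
      qed
      then obtain t where t: "t \<in> kys g" "bad k t" "\<omega> t = W" by blast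
      then obtain j where j: "j < k" "mdvd (ms ! j) t" unfolding bad_def by blast
      define mn where "mn \<equiv> sng (t - ms ! j) (lkp g t / lkp (fs ! j) (ms ! j))"
      define g1 where "g1 \<equiv> g - mn * fs ! j"
      note R = red_step[OF k j(1) Suc.prems(1) t(1) j(2), folded mn_def, folded g1_def]
      have set_eq: "{s\<in>kys g1. bad k s \<and> \<omega> s = W} = {s\<in>kys g. bad k s \<and> \<omega> s = W} - {t}"
      proof -
        have e1: "s \<in> kys g1 \<longleftrightarrow> s \<in> kys g" if "\<omega> s = W" "s \<noteq> t" for s
          using R(5)[of s] that t(3) by (simp add: in_keys_iff)
        have e2: "t \<notin> kys g1" using R(4) by (simp add: in_keys_iff)
        show ?thesis using e1 e2 t by blast
      qed
      have "card {s\<in>kys g1. bad k s \<and> \<omega> s = W} = c"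
        unfolding set_eq using Suc.prems(3) t by (simp add: card_Diff_singleton)
      moreover have "\<forall>s\<in>kys g1. bad k s \<longrightarrow> \<omega> s \<le> W"
      proof (intro ballI impI)
        fix s assume s: "s \<in> kys g1" "bad k s"
        have "s \<in> kys g \<or> s \<in> kys (mn * fs ! j)" using s(1) keys_diff[of g] unfolding g1_def by blast
        then show "\<omega> s \<le> W" using Suc.prems(2) s(2) R(3) t(3) by blast
      qed
      ultimately obtain r1 where r1: "r1 \<in> ideal_gen n (take k fs)" "g1 - r1 \<in> poly_ring n"
        "\<forall>t\<in>kys (g1 - r1). \<not> bad k t" using Suc.IH R(1) by blast
      have "g - (r1 + mn * fs ! j) = g1 - r1" unfolding g1_def by simp
      note eq = this
      show ?case
      proof (rule bexI[where x = "r1 + mn * fs ! j"])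
        show "g - (r1 + mn * fs ! j) \<in> poly_ring n \<and> (\<forall>t\<in>kys (g - (r1 + mn * fs ! j)). \<not> bad k t)"
          unfolding eq using r1 by blast
        show "r1 + mn * fs ! j \<in> ideal_gen n (take k fs)" by (rule ig_add[OF r1(1) R(2)])
      qed
    qed
    have "\<forall>t\<in>kys g. bad k t \<longrightarrow> \<omega> t \<le> W" using Suc.prems(2) by (simp add: less_Suc_eq_le)
    then show ?case using inner[OF Suc.prems(1) _ refl] by blast
  qed
  have "\<forall>t\<in>kys g. bad k t \<longrightarrow> \<omega> t < Suc (Max (\<omega> ` kys g))"
    by (simp add: le_imp_less_Suc)
  then show ?thesis by (rule main[OF g])
qed

end



context CLM begin

lemma prod_facts:
  assumes jl: "j < length fs" and tq: "\<forall>s\<in>kys q. \<omega> s \<le> \<omega> tq"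
  shows "lkp (q * fs ! j) (tq + ms ! j) = lkp q tq * lkp (fs ! j) (ms ! j)"
    "\<And>s. s \<in> kys (q * fs ! j) \<Longrightarrow> \<omega> s \<le> \<omega> tq + \<omega> (ms ! j)"
    "\<And>s. s \<in> kys (q * fs ! j) \<Longrightarrow> \<omega> tq + \<omega> (ms ! j) \<le> \<omega> s \<Longrightarrow> mdvd (ms ! j) s"
proof -
  have h2: "\<forall>u\<in>kys (fs ! j). u \<noteq> ms ! j \<longrightarrow> \<omega> u < \<omega> (ms ! j)" using lower[OF jl] by blast
  have h3: "\<forall>u\<in>kys (fs ! j). \<omega> u \<le> \<omega> (ms ! j)"
  proof
    fix u assume "u \<in> kys (fs ! j)"
    then show "\<omega> u \<le> \<omega> (ms ! j)" using h2 by (cases "u = ms ! j") auto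
  qed
  show "lkp (q * fs ! j) (tq + ms ! j) = lkp q tq * lkp (fs ! j) (ms ! j)"
    by (rule top_coeff[where \<omega> = \<omega>, OF w_add tq h2])
  show "\<omega> s \<le> \<omega> tq + \<omega> (ms ! j)" if "s \<in> kys (q * fs ! j)" for s
    by (rule keys_mult_w[where \<omega> = \<omega>, OF w_add that tq h3])
  show "mdvd (ms ! j) s" if H: "s \<in> kys (q * fs ! j)" "\<omega> tq + \<omega> (ms ! j) \<le> \<omega> s" for s
  proof -
    obtain a where "s = a + ms ! j" using keys_mult_top[where \<omega> = \<omega>, OF w_add H(1) tq h2 H(2)] by blast
    then show ?thesis using mdvd_add by simp
  qed
qed

lemma bad_mono: "bad k t \<Longrightarrow> bad (Suc k) t"
  unfolding bad_def using less_Suc_eq by blast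

lemma not_bad_shift:
  assumes kl: "k < length fs" and nb: "\<not> bad k tq"
  shows "\<not> bad k (tq + ms ! k)"
proof
  assume "bad k (tq + ms ! k)"
  then obtain i where i: "i < k" "mdvd (ms ! i) (tq + ms ! k)" unfolding bad_def by blast
  have "mcop (ms ! i) (ms ! k)" using cop[of i k] i(1) kl by simp
  then have "mdvd (ms ! i) tq" using mdvd_cop i(2) by blast
  then show False using nb i(1) unfolding bad_def by blast
qed

lemma GB:
  assumes "k \<le> length fs"
  shows "h \<in> ideal_gen n (take k fs) \<Longrightarrow> t \<in> kys h \<Longrightarrow> \<forall>s\<in>kys h. \<omega> s \<le> \<omega> t \<Longrightarrow> bad k t"
  using assms
proof (induction k arbitrary: h t)
  case 0
  then have "h = 0" using ig_Nil by simp
  then show ?case using "0.prems"(2) by simp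
next
  case (Suc k)
  have kl: "k < length fs" using Suc.prems(4) by simp
  let ?f = "fs ! k" and ?m = "ms ! k"
  obtain p a where pa: "p \<in> ideal_gen n (take k fs)" "a \<in> poly_ring n" "h = p + a * ?f"
    using ig_Suc[OF kl Suc.prems(1)] by blast
  obtain r where r: "r \<in> ideal_gen n (take k fs)" "a - r \<in> poly_ring n" "\<forall>t\<in>kys (a - r). \<not> bad k t"
  proof -
    have "k \<le> length fs" using kl by simp
    from red[OF this pa(2)] show ?thesis using that by blast
  qed
  define a' where "a' = a - r"
  define p' where "p' = p + r * ?f"
  have p': "p' \<in> ideal_gen n (take k fs)"
    unfolding p'_def using ig_add[OF pa(1) ig_mult[OF r(1) fs_nth_ring[OF kl]]] by (simp add: mult.commute)
  have h: "h = p' + a' * ?f" unfolding p'_def a'_def pa(3) by (simp add: algebra_simps)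
  have IH: "\<And>t. t \<in> kys p' \<Longrightarrow> \<forall>s\<in>kys p'. \<omega> s \<le> \<omega> t \<Longrightarrow> bad k t"
    using Suc.IH[OF p'] kl by simp
  show ?case
  proof (cases "a' = 0")
    case True
    then have "h = p'" using h by simp
    then show ?thesis using IH Suc.prems(2,3) bad_mono by blast
  next
    case False
    obtain tq where tq: "tq \<in> kys a'" "\<forall>s\<in>kys a'. \<omega> s \<le> \<omega> tq"
      using top_ex[OF False, of \<omega>] by blast
    have nbq: "\<not> bad k tq" using r(3) tq(1) unfolding a'_def by blast
    note PF = prod_facts[OF kl tq(2)]
    define T where "T = tq + ?m"
    define W2 where "W2 = \<omega> tq + \<omega> ?m"
    have wT: "\<omega> T = W2" unfolding T_def W2_def by (rule w_add)
    have cT: "lkp (a' * ?f) T \<noteq> 0"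
      unfolding T_def PF(1) using tq(1) lc[OF kl] by (simp add: in_keys_iff)
    have kh: "s \<in> kys h \<Longrightarrow> s \<in> kys p' \<or> s \<in> kys (a' * ?f)" for s
      using keys_add[of p' "a' * ?f"] h by blast
    have PF2': "\<And>s. s \<in> kys (a' * ?f) \<Longrightarrow> \<omega> s \<le> W2" using PF(2) unfolding W2_def by blast
    have lh: "lkp h s = lkp p' s + lkp (a' * ?f) s" for s using h by (simp add: lookup_add)
    show ?thesis
    proof (cases "\<exists>s\<in>kys p'. W2 < \<omega> s")
      case True
      then obtain s1 where s1: "s1 \<in> kys p'" "W2 < \<omega> s1" by blast
      have "s1 \<notin> kys (a' * ?f)" using PF2'[of s1] s1(2) by linarith
      then have "s1 \<in> kys h" using s1(1) lh[of s1] by (simp add: in_keys_iff)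
      then have "\<omega> s1 \<le> \<omega> t" using Suc.prems(3) by blast
      then have wt: "W2 < \<omega> t" using s1(2) by linarith
      then have tn: "t \<notin> kys (a' * ?f)" using PF2'[of t] by linarith
      then have tp: "t \<in> kys p'" using kh[OF Suc.prems(2)] by blast
      have "\<forall>s\<in>kys p'. \<omega> s \<le> \<omega> t"
      proof
        fix s assume s: "s \<in> kys p'"
        show "\<omega> s \<le> \<omega> t"
        proof (cases "W2 < \<omega> s")
          case True
          then have "s \<notin> kys (a' * ?f)" using PF2'[of s] by linarith
          then have "s \<in> kys h" using s lh[of s] by (simp add: in_keys_iff)
          then show ?thesis using Suc.prems(3) by blast
        next
          case False
          then show ?thesis using wt by linarith
        qed
      qed
      then show ?thesis using IH[OF tp] bad_mono by blast
    next
      case False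
      then have allp: "\<forall>s\<in>kys p'. \<omega> s \<le> W2" by (simp add: not_less)
      have "lkp p' T = 0"
      proof (rule ccontr)
        assume "lkp p' T \<noteq> 0"
        then have "T \<in> kys p'" by (simp add: in_keys_iff)
        then have "bad k T" using IH allp wT by simp
        then show False using not_bad_shift[OF kl nbq] unfolding T_def by blast
      qed
      then have "T \<in> kys h" using cT lh[of T] by (simp add: in_keys_iff)
      then have "\<omega> T \<le> \<omega> t" using Suc.prems(3) by blast
      then have "W2 \<le> \<omega> t" using wT by simp
      moreover have "\<omega> t \<le> W2"
        using kh[OF Suc.prems(2)] allp PF2'[of t] by blast
      ultimately have wt: "\<omega> t = W2" by simp
      show ?thesis
      proof (cases "t \<in> kys (a' * ?f)")
        case True
        then have "mdvd ?m t" using PF(3) wt W2_def by simp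
        then show ?thesis unfolding bad_def by blast
      next
        case False
        then have "t \<in> kys p'" using kh[OF Suc.prems(2)] by blast
        moreover have "\<forall>s\<in>kys p'. \<omega> s \<le> \<omega> t" using allp wt by simp
        ultimately show ?thesis using IH bad_mono by blast
      qed
    qed
  qed
qed

lemma regular_step:
  assumes kl: "k < length fs" and g: "g \<in> poly_ring n" and gf: "g * fs ! k \<in> ideal_gen n (take k fs)"
  shows "g \<in> ideal_gen n (take k fs)"
proof -
  let ?f = "fs ! k" and ?m = "ms ! k"
  obtain r where r: "r \<in> ideal_gen n (take k fs)" "g - r \<in> poly_ring n" "\<forall>t\<in>kys (g - r). \<not> bad k t"
  proof -
    have "k \<le> length fs" using kl by simp
    from red[OF this g] show ?thesis using that by blast
  qed
  define g' where "g' = g - r"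
  have "g' * ?f = g * ?f - ?f * r" unfolding g'_def by (simp add: algebra_simps)
  then have g'f: "g' * ?f \<in> ideal_gen n (take k fs)"
    using ig_diff[OF gf ig_mult[OF r(1) fs_nth_ring[OF kl]]] by simp
  have "g' = 0"
  proof (rule ccontr)
    assume nz: "g' \<noteq> 0"
    obtain tq where tq: "tq \<in> kys g'" "\<forall>s\<in>kys g'. \<omega> s \<le> \<omega> tq"
      using top_ex[OF nz, of \<omega>] by blast
    have nbq: "\<not> bad k tq" using r(3) tq(1) unfolding g'_def by blast
    note PF = prod_facts[OF kl tq(2)]
    have "lkp (g' * ?f) (tq + ?m) \<noteq> 0"
      unfolding PF(1) using tq(1) lc[OF kl] by (simp add: in_keys_iff)
    then have T: "tq + ?m \<in> kys (g' * ?f)" by (simp add: in_keys_iff)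
    have "\<forall>s\<in>kys (g' * ?f). \<omega> s \<le> \<omega> (tq + ?m)" using PF(2) w_add by simp
    then have "bad k (tq + ?m)" using GB[OF _ g'f T] kl by simp
    then show False using not_bad_shift[OF kl nbq] by blast
  qed
  then show ?thesis using r(1) unfolding g'_def by simp
qed

theorem regular: "regular_seq n fs"
  unfolding regular_seq_def
proof (intro conjI allI impI ballI)
  show "set fs \<subseteq> poly_ring n" by (rule fs_ring)
  show "1 \<notin> ideal_gen n fs"
  proof
    assume "1 \<in> ideal_gen n fs"
    then have "1 \<in> ideal_gen n (take (length fs) fs)" by simp
    then have "bad (length fs) 0" using GB[of "length fs" 1 0] by simp
    then obtain j where "j < length fs" "mdvd (ms ! j) 0" unfolding bad_def by blast
    then show False using nz mdvd_zero by blast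
  qed
  fix i g assume "i < length fs" "g \<in> poly_ring n" "g * fs ! i \<in> ideal_gen n (take i fs)"
  then show "g \<in> ideal_gen n (take i fs)" using regular_step by blast
qed

end



abbreviation xm :: "nat \<Rightarrow> nat \<Rightarrow>\<^sub>0 nat" where "xm a \<equiv> sng a 1"

definition wsum :: "(nat \<Rightarrow> nat) \<Rightarrow> nat \<Rightarrow> (nat \<Rightarrow>\<^sub>0 nat) \<Rightarrow> nat" where
  "wsum wt n m = (\<Sum>k<n. lkp m k * wt k)"

lemma wsum_add: "wsum wt n (a + b) = wsum wt n a + wsum wt n b"
  unfolding wsum_def by (simp add: lookup_add sum.distrib distrib_right)

lemma wsum_xm: assumes "a < n" shows "wsum wt n (xm a) = wt a"
proof -
  have "wsum wt n (xm a) = (\<Sum>k<n. if k = a then wt k else 0)"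
    unfolding wsum_def by (rule sum.cong) (auto simp: lookup_single when_def)
  also have "\<dots> = wt a" using assms by (simp add: sum.delta')
  finally show ?thesis .
qed

lemma wsum_xm2: "a < n \<Longrightarrow> b < n \<Longrightarrow> wsum wt n (xm a + xm b) = wt a + wt b"
  by (simp only: wsum_add wsum_xm)

lemma Var_mult: "Var a * Var b = sng (xm a + xm b) 1"
  unfolding Var_def by (simp add: mult_single)

lemma keys_xm2: "kys (xm a + xm b) = {a, b}"
  by (simp add: keys_add_nat insert_commute)

lemma mcop_keys: "kys a \<inter> kys b = {} \<Longrightarrow> mcop a b"
  unfolding mcop_def by (auto simp: in_keys_iff)

lemma xm2_nz: "xm a + xm b \<noteq> 0"
  using keys_xm2[of a b] by auto

lemma xm_nz: "xm a \<noteq> 0"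
proof
  assume "xm a = 0"
  then have "lkp (xm a) a = 0" by simp
  then show False by simp
qed

lemma sum_gen:
  fixes \<mu> :: "nat \<Rightarrow> (nat \<Rightarrow>\<^sub>0 nat)" and \<omega> :: "(nat \<Rightarrow>\<^sub>0 nat) \<Rightarrow> nat"
  assumes ia: "ia < N" and w: "\<And>i. i < N \<Longrightarrow> i \<noteq> ia \<Longrightarrow> \<omega> (\<mu> i) < \<omega> (\<mu> ia)"
  shows "lkp (\<Sum>i<N. sng (\<mu> i) (1::complex)) (\<mu> ia) \<noteq> 0"
    "\<And>u. u \<in> kys (\<Sum>i<N. sng (\<mu> i) (1::complex)) \<Longrightarrow> u \<noteq> \<mu> ia \<Longrightarrow> \<omega> u < \<omega> (\<mu> ia)"
proof -
  have "lkp (\<Sum>i<N. sng (\<mu> i) (1::complex)) (\<mu> ia) = (\<Sum>i<N. lkp (sng (\<mu> i) (1::complex)) (\<mu> ia))"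
    by (rule lookup_sum)
  also have "\<dots> = (\<Sum>i<N. if i = ia then 1 else 0)"
  proof (rule sum.cong[OF refl])
    fix i assume iN: "i \<in> {..<N}"
    show "lkp (sng (\<mu> i) (1::complex)) (\<mu> ia) = (if i = ia then 1 else 0)"
    proof (cases "i = ia")
      case True
      then show ?thesis by simp
    next
      case False
      have "\<omega> (\<mu> i) < \<omega> (\<mu> ia)" using w[of i] iN False by simp
      then have "\<mu> i \<noteq> \<mu> ia" by (metis less_irrefl)
      then show ?thesis using False by (simp add: lookup_single_not_eq)
    qed
  qed
  also have "\<dots> = 1" using ia by (simp add: sum.delta')
  finally show "lkp (\<Sum>i<N. sng (\<mu> i) (1::complex)) (\<mu> ia) \<noteq> 0" by simp
  show "\<omega> u < \<omega> (\<mu> ia)" if u: "u \<in> kys (\<Sum>i<N. sng (\<mu> i) (1::complex))" "u \<noteq> \<mu> ia" for u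
  proof -
    have "kys (\<Sum>i<N. sng (\<mu> i) (1::complex)) \<subseteq> (\<Union>i\<in>{..<N}. kys (sng (\<mu> i) (1::complex)))"
      by (rule keys_sum)
    then have "u \<in> (\<Union>i\<in>{..<N}. kys (sng (\<mu> i) (1::complex)))" using u(1) by (rule subsetD)
    then obtain i where i1: "i \<in> {..<N}" and i2: "u \<in> kys (sng (\<mu> i) (1::complex))" by (rule UN_E)
    have i: "i < N" "u = \<mu> i" using i1 i2 by simp_all
    then have "i \<noteq> ia" using u(2) by blast
    then show ?thesis using w i by simp
  qed
qed

lemma two_gen1:
  fixes \<omega> :: "(nat \<Rightarrow>\<^sub>0 nat) \<Rightarrow> nat"
  assumes "\<omega> B < \<omega> A"
  shows "lkp (sng A (1::complex) - sng B 1) A \<noteq> 0"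
    "\<And>u. u \<in> kys (sng A (1::complex) - sng B 1) \<Longrightarrow> u \<noteq> A \<Longrightarrow> \<omega> u < \<omega> A"
proof -
  have "A \<noteq> B" using assms by auto
  then show "lkp (sng A (1::complex) - sng B 1) A \<noteq> 0" by (simp add: lookup_minus lookup_single when_def)
  show "\<omega> u < \<omega> A" if "u \<in> kys (sng A (1::complex) - sng B 1)" "u \<noteq> A" for u
  proof -
    have "u \<in> kys (sng A (1::complex)) \<union> kys (sng B (1::complex))" using keys_diff[of "sng A (1::complex)" "sng B 1"] that(1) by (rule subsetD)
    then have "u = B" using that(2) by simp
    then show ?thesis using assms by simp
  qed
qed

lemma two_gen2:
  fixes \<omega> :: "(nat \<Rightarrow>\<^sub>0 nat) \<Rightarrow> nat"
  assumes "\<omega> A < \<omega> B"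
  shows "lkp (sng A (1::complex) - sng B 1) B \<noteq> 0"
    "\<And>u. u \<in> kys (sng A (1::complex) - sng B 1) \<Longrightarrow> u \<noteq> B \<Longrightarrow> \<omega> u < \<omega> B"
proof -
  have "A \<noteq> B" using assms by auto
  then show "lkp (sng A (1::complex) - sng B 1) B \<noteq> 0" by (simp add: lookup_minus lookup_single when_def)
  show "\<omega> u < \<omega> B" if "u \<in> kys (sng A (1::complex) - sng B 1)" "u \<noteq> B" for u
  proof -
    have "u \<in> kys (sng A (1::complex)) \<union> kys (sng B (1::complex))" using keys_diff[of "sng A (1::complex)" "sng B 1"] that(1) by (rule subsetD)
    then have "u = A" using that(2) by simp
    then show ?thesis using assms by simp
  qed
qed

lemma pr_xm2: "a < n \<Longrightarrow> b < n \<Longrightarrow> sng (xm a + xm b) c \<in> poly_ring n"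
  by (rule pr_single) (unfold keys_xm2, simp)

lemma pr_xm: "a < n \<Longrightarrow> sng (xm a) c \<in> poly_ring n"
  by (rule pr_single) simp




definition wtP :: "nat \<Rightarrow> nat" where
  "wtP k = (if k < 4 then 2 else if k = 4 \<or> k = 7 \<or> k = 9 \<or> k = 10 then 3 else 0)"

definition mP :: "nat \<Rightarrow> nat \<Rightarrow> nat \<Rightarrow> nat \<Rightarrow>\<^sub>0 nat" where
  "mP j l i = xm (4*i+j) + xm (4*i+2+l)"

lemma gens_I'_eq: "gens_I' N = [\<Sum>i<N. sng (mP 0 0 i) 1, \<Sum>i<N. sng (mP 0 1 i) 1,
   \<Sum>i<N. sng (mP 1 0 i) 1, \<Sum>i<N. sng (mP 1 1 i) 1]"
  unfolding gens_I'_def vv_def ww_def Var_mult mP_def by simp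

lemma wtP_shift: "c < 4 \<Longrightarrow> wtP (4*i+c) = (if i = 0 then wtP c else if i = 1 then wtP (4+c) else if i = 2 then wtP (8+c) else 0)"
  unfolding wtP_def by auto

lemma w_mP: assumes "i < N" "j \<le> 1" "l \<le> 1"
  shows "wsum wtP (4*N) (mP j l i) = wtP (4*i+j) + wtP (4*i+(2+l))"
proof -
  have "4*i+j < 4*N" "4*i+2+l < 4*N" using assms by linarith+
  then show ?thesis unfolding mP_def by (simp only: wsum_xm2 add.assoc)
qed

lemma keys_mP: "kys (mP j l i) = {4*i+j, 4*i+2+l}"
  unfolding mP_def by (rule keys_xm2)

lemma less4: "(j::nat) < 4 \<Longrightarrow> j = 0 \<or> j = 1 \<or> j = 2 \<or> j = 3"
  by auto

lemma regI':
  assumes N: "N \<ge> 3"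
  shows "regular_seq (4*N) (gens_I' N)"
proof -
  let ?\<omega> = "wsum wtP (4*N)"
  define ms where "ms = [mP 0 0 0, mP 0 1 1, mP 1 0 2, mP 1 1 0]"
  have W00: "?\<omega> (mP 0 0 i) < ?\<omega> (mP 0 0 0)" if "i < N" "i \<noteq> 0" for i
    using that N by (simp add: w_mP wtP_shift) (simp add: wtP_def)
  have W01: "?\<omega> (mP 0 1 i) < ?\<omega> (mP 0 1 1)" if "i < N" "i \<noteq> 1" for i
    using that N by (simp add: w_mP wtP_shift) (simp add: wtP_def)
  have W10: "?\<omega> (mP 1 0 i) < ?\<omega> (mP 1 0 2)" if "i < N" "i \<noteq> 2" for i
    using that N by (simp add: w_mP wtP_shift) (simp add: wtP_def)
  have W11: "?\<omega> (mP 1 1 i) < ?\<omega> (mP 1 1 0)" if "i < N" "i \<noteq> 0" for i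
    using that N by (simp add: w_mP wtP_shift) (simp add: wtP_def)
  have N0: "0 < N" "1 < N" "2 < N" using N by simp_all
  note S00 = sum_gen[where ia=0 and N=N and \<mu>="mP 0 0" and \<omega>="?\<omega>", OF N0(1) W00]
  note S01 = sum_gen[where ia=1 and N=N and \<mu>="mP 0 1" and \<omega>="?\<omega>", OF N0(2) W01]
  note S10 = sum_gen[where ia=2 and N=N and \<mu>="mP 1 0" and \<omega>="?\<omega>", OF N0(3) W10]
  note S11 = sum_gen[where ia=0 and N=N and \<mu>="mP 1 1" and \<omega>="?\<omega>", OF N0(1) W11]
  have ring: "(\<Sum>i<N. sng (mP j l i) (1::complex)) \<in> poly_ring (4*N)" if "j \<le> 1" "l \<le> 1" for j l
  proof (rule pr_sum)
    fix i assume "i \<in> {..<N}"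
    then have "4*i+j < 4*N" "4*i+2+l < 4*N" using that by auto
    then show "sng (mP j l i) (1::complex) \<in> poly_ring (4*N)" unfolding mP_def by (rule pr_xm2)
  qed
  interpret CLM "4*N" ?\<omega> "gens_I' N" ms
  proof
    show "?\<omega> (a + b) = ?\<omega> a + ?\<omega> b" for a b by (rule wsum_add)
    show "set (gens_I' N) \<subseteq> poly_ring (4*N)" unfolding gens_I'_eq using ring by simp
    show "lkp (gens_I' N ! j) (ms ! j) \<noteq> 0" if "j < length (gens_I' N)" for j
    proof -
      have "j < 4" using that unfolding gens_I'_eq by simp
      then show ?thesis unfolding gens_I'_eq ms_def using S00(1) S01(1) S10(1) S11(1)
        by (auto dest!: less4)
    qed
    show "?\<omega> u < ?\<omega> (ms ! j)" if "j < length (gens_I' N)" "u \<in> kys (gens_I' N ! j)" "u \<noteq> ms ! j"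
      for j u
    proof -
      have "j < 4" using that unfolding gens_I'_eq by simp
      then show ?thesis using that(2,3) unfolding gens_I'_eq ms_def using S00(2) S01(2) S10(2) S11(2)
        by (auto dest!: less4)
    qed
    show "mcop (ms ! i) (ms ! j)" if "i < length (gens_I' N)" "j < length (gens_I' N)" "i \<noteq> j" for i j
    proof -
      have "i < 4" "j < 4" using that unfolding gens_I'_eq by simp_all
      then show ?thesis using that(3) unfolding ms_def
        by (intro mcop_keys) (auto simp: keys_mP dest!: less4)
    qed
    show "ms ! j \<noteq> 0" if "j < length (gens_I' N)" for j
    proof -
      have "j < 4" using that unfolding gens_I'_eq by simp
      then show ?thesis unfolding ms_def mP_def using xm2_nz by (auto dest!: less4)
    qed
  qed
  show ?thesis by (rule regular)
qed




definition wtI :: "nat \<Rightarrow> nat" where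
  "wtI k = (if k = 0 \<or> k = 3 then 9 else if k = 1 \<or> k = 2 then 10
     else if k = 4 \<or> k = 7 \<or> k = 8 \<or> k = 11 then 8 else if k = 5 \<or> k = 10 then 11
     else if k < 12 then 0 else if k mod 4 = 0 then 1 else 0)"

definition lin :: "nat \<Rightarrow> nat \<Rightarrow> nat \<Rightarrow>\<^sub>0 nat" where "lin c i = xm (4*i+c)"
definition qa :: "nat \<Rightarrow> nat \<Rightarrow>\<^sub>0 nat" where "qa i = xm (4*i) + xm (4*i+3)"
definition qb :: "nat \<Rightarrow> nat \<Rightarrow>\<^sub>0 nat" where "qb i = xm (4*i+1) + xm (4*i+2)"
definition qm :: "nat \<Rightarrow> nat \<Rightarrow>\<^sub>0 nat" where "qm i = (if i = 0 then qb 0 else qa i)"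
definition Qp :: "nat \<Rightarrow> mpoly" where "Qp i = sng (qa i) 1 - sng (qb i) 1"

lemma gens_I_eq: "gens_I N = [\<Sum>i<N. sng (lin 0 i) 1, \<Sum>i<N. sng (lin 1 i) 1,
   \<Sum>i<N. sng (lin 2 i) 1, \<Sum>i<N. sng (lin 3 i) 1] @ map Qp [0..<N]"
  unfolding gens_I_def ka_def kb_def kc_def kd_def Var_mult Qp_def qa_def qb_def lin_def
  by (simp add: Var_def)

lemma wtI_shift: "c < 4 \<Longrightarrow> wtI (4*i+c) = (if i = 0 then wtI c else if i = 1 then wtI (4+c)
   else if i = 2 then wtI (8+c) else if c = 0 then 1 else 0)"
  unfolding wtI_def by (auto; presburger)

lemma w_lin: "i < N \<Longrightarrow> c < 4 \<Longrightarrow> wsum wtI (4*N) (lin c i) = wtI (4*i+c)"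
  unfolding lin_def by (rule wsum_xm) linarith

lemma w_qa: assumes "i < N" shows "wsum wtI (4*N) (qa i) = wtI (4*i) + wtI (4*i+3)"
proof -
  have "4*i < 4*N" "4*i+3 < 4*N" using assms by linarith+
  then show ?thesis unfolding qa_def by (rule wsum_xm2)
qed

lemma w_qb: assumes "i < N" shows "wsum wtI (4*N) (qb i) = wtI (4*i+1) + wtI (4*i+2)"
proof -
  have "4*i+1 < 4*N" "4*i+2 < 4*N" using assms by linarith+
  then show ?thesis unfolding qb_def by (rule wsum_xm2)
qed

lemma lin_w: "i < N \<Longrightarrow> c < 4 \<Longrightarrow> wsum wtI (4*N) (lin c i) = (if i = 0 then wtI c else if i = 1 then wtI (4+c)
   else if i = 2 then wtI (8+c) else if c = 0 then 1 else 0)"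
  using w_lin[of i N c] wtI_shift[of c i] by simp

lemma qa_w: "i < N \<Longrightarrow> wsum wtI (4*N) (qa i) = (if i = 0 then wtI 0 + wtI 3 else if i = 1 then wtI 4 + wtI 7
   else if i = 2 then wtI 8 + wtI 11 else 1)"
  using w_qa[of i N] wtI_shift[of 0 i] wtI_shift[of 3 i] by simp

lemma qb_w: "i < N \<Longrightarrow> wsum wtI (4*N) (qb i) = (if i = 0 then wtI 1 + wtI 2 else if i = 1 then wtI 5 + wtI 6
   else if i = 2 then wtI 9 + wtI 10 else 0)"
  using w_qb[of i N] wtI_shift[of 1 i] wtI_shift[of 2 i] by simp


lemma keys_lin: "kys (lin c i) = {4*i+c}" unfolding lin_def by simp
lemma keys_qa: "kys (qa i) = {4*i, 4*i+3}" unfolding qa_def by (rule keys_xm2)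
lemma keys_qb: "kys (qb i) = {4*i+1, 4*i+2}" unfolding qb_def by (rule keys_xm2)

lemma regI:
  assumes N: "N \<ge> 3"
  shows "regular_seq (4*N) (gens_I N)"
proof -
  let ?\<omega> = "wsum wtI (4*N)"
  define ms where "ms = [lin 0 0, lin 1 1, lin 2 2, lin 3 0] @ map qm [0..<N]"
  have len: "length (gens_I N) = 4 + N" unfolding gens_I_eq by simp
  have W0: "?\<omega> (lin 0 i) < ?\<omega> (lin 0 0)" if "i < N" "i \<noteq> 0" for i
    using that N lin_w[of i N 0] lin_w[of 0 N 0] by (simp add: wtI_def)
  have W1: "?\<omega> (lin 1 i) < ?\<omega> (lin 1 1)" if "i < N" "i \<noteq> 1" for i
    using that N lin_w[of i N 1] lin_w[of 1 N 1] by (simp add: wtI_def)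
  have W2: "?\<omega> (lin 2 i) < ?\<omega> (lin 2 2)" if "i < N" "i \<noteq> 2" for i
    using that N lin_w[of i N 2] lin_w[of 2 N 2] by (simp add: wtI_def)
  have W3: "?\<omega> (lin 3 i) < ?\<omega> (lin 3 0)" if "i < N" "i \<noteq> 0" for i
    using that N lin_w[of i N 3] lin_w[of 0 N 3] by (simp add: wtI_def)
  have N0: "0 < N" "1 < N" "2 < N" using N by simp_all
  note S0 = sum_gen[where ia=0 and N=N and \<mu>="lin 0" and \<omega>="?\<omega>", OF N0(1) W0]
  note S1 = sum_gen[where ia=1 and N=N and \<mu>="lin 1" and \<omega>="?\<omega>", OF N0(2) W1]
  note S2 = sum_gen[where ia=2 and N=N and \<mu>="lin 2" and \<omega>="?\<omega>", OF N0(3) W2]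
  note S3 = sum_gen[where ia=0 and N=N and \<mu>="lin 3" and \<omega>="?\<omega>", OF N0(1) W3]
  have WQ0: "?\<omega> (qa 0) < ?\<omega> (qb 0)" using N0(1) using qa_w[of 0 N] qb_w[of 0 N] by (simp add: wtI_def)
  have WQ: "?\<omega> (qb i) < ?\<omega> (qa i)" if "i < N" "i \<noteq> 0" for i
    using that N qa_w[of i N] qb_w[of i N] by (simp add: wtI_def)
  have SQ: "lkp (Qp i) (qm i) \<noteq> 0 \<and> (\<forall>u\<in>kys (Qp i). u \<noteq> qm i \<longrightarrow> ?\<omega> u < ?\<omega> (qm i))"
    if "i < N" for i
  proof (cases "i = 0")
    case True
    then show ?thesis unfolding Qp_def qm_def using two_gen2[OF WQ0] by simp
  next
    case False
    then show ?thesis unfolding Qp_def qm_def using two_gen1[OF WQ[OF that False]] by simp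
  qed
  have ring_lin: "(\<Sum>i<N. sng (lin c i) (1::complex)) \<in> poly_ring (4*N)" if "c < 4" for c
  proof (rule pr_sum)
    fix i assume "i \<in> {..<N}"
    then have "4*i+c < 4*N" using that by auto
    then show "sng (lin c i) (1::complex) \<in> poly_ring (4*N)" unfolding lin_def by (rule pr_xm)
  qed
  have ring_Q: "Qp i \<in> poly_ring (4*N)" if "i < N" for i
  proof -
    have "4*i < 4*N" "4*i+1 < 4*N" "4*i+2 < 4*N" "4*i+3 < 4*N" using that by linarith+
    then show ?thesis unfolding Qp_def qa_def qb_def by (intro pr_diff pr_xm2)
  qed
  have fs_hi: "gens_I N ! (4 + i) = Qp i" if "i < N" for i
    unfolding gens_I_eq using that by (simp add: nth_append)
  have ms_hi: "ms ! (4 + i) = qm i" if "i < N" for i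
    unfolding ms_def using that by (simp add: nth_append)
  have split: "j < 4 \<or> (\<exists>i<N. j = 4 + i)" if "j < length (gens_I N)" for j
    using that len by presburger
  have kms: "kys (ms ! j) = (if j = 0 then {0} else if j = 1 then {5} else if j = 2 then {10}
      else if j = 3 then {3} else if j = 4 then {1,2} else {4*(j-4), 4*(j-4)+3})"
    if jl: "j < length (gens_I N)" for j
  proof (cases "j < 4")
    case True
    then show ?thesis unfolding ms_def using less4[OF True] by (auto simp: nth_append keys_lin)
  next
    case False
    then obtain i where i: "i < N" "j = 4 + i" using split[OF jl] by blast
    then show ?thesis using ms_hi[OF i(1)] by (auto simp: qm_def keys_qa keys_qb)
  qed
  interpret CLM "4*N" ?\<omega> "gens_I N" ms
  proof
    show "?\<omega> (a + b) = ?\<omega> a + ?\<omega> b" for a b by (rule wsum_add)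
    show "set (gens_I N) \<subseteq> poly_ring (4*N)" unfolding gens_I_eq using ring_lin ring_Q by auto
    have LL: "lkp (gens_I N ! j) (ms ! j) \<noteq> 0 \<and> (\<forall>u\<in>kys (gens_I N ! j). u \<noteq> ms ! j \<longrightarrow> ?\<omega> u < ?\<omega> (ms ! j))"
      if jl: "j < length (gens_I N)" for j
    proof (cases "j < 4")
      case True
      then show ?thesis unfolding gens_I_eq ms_def using S0 S1 S2 S3
        by (auto simp: nth_append dest!: less4)
    next
      case False
      then obtain i where i: "i < N" "j = 4 + i" using split[OF jl] by blast
      then show ?thesis using fs_hi[OF i(1)] ms_hi[OF i(1)] SQ[OF i(1)] by simp
    qed
    show "lkp (gens_I N ! j) (ms ! j) \<noteq> 0" if "j < length (gens_I N)" for j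
      using LL[OF that] by blast
    show "?\<omega> u < ?\<omega> (ms ! j)" if "j < length (gens_I N)" "u \<in> kys (gens_I N ! j)" "u \<noteq> ms ! j" for j u
      using LL[OF that(1)] that(2,3) by blast
    show "mcop (ms ! i) (ms ! j)" if "i < length (gens_I N)" "j < length (gens_I N)" "i \<noteq> j" for i j
    proof (rule mcop_keys)
      show "kys (ms ! i) \<inter> kys (ms ! j) = {}"
        unfolding kms[OF that(1)] kms[OF that(2)] using that(3) by (auto; presburger)
    qed
    show "ms ! j \<noteq> 0" if "j < length (gens_I N)" for j
    proof -
      have "kys (ms ! j) \<noteq> {}" unfolding kms[OF that] by simp
      then show ?thesis by auto
    qed
  qed
  show ?thesis by (rule regular)
qed


theorem mainTheorem9:
  fixes N :: nat
  assumes "N \<ge> 3"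
  shows "regular_seq (4*N) (gens_I N) \<and> regular_seq (4*N) (gens_I' N)"
  using regI[OF assms] regI'[OF assms] by blast

end
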